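(* Under the setting below, for all $\mathbf k\neq\mathbf h$ in $(\mathbb Z/p\mathbb Z)^{\mathsf N}$ one has $\langle\mathbf k|\mathbf h\rangle=0$. Moreover there is a constant $C_{\mathsf N}$ (independent of $\mathbf h$) such that for every $\mathbf h=(h_1,\dots,h_{\mathsf N})$ with $h_a\in\{0,\dots,p-1\}$, $$\langle\mathbf h|\mathbf h\rangle=\frac{C_{\mathsf N}\prod_{a=1}^{[\mathsf N]}\prod_{j=1}^{h_a}a(\eta_a^{(j)})/\bar a(\eta_a^{(j-1)})}{\prod_{1\le b<a\le[\mathsf N]}\left(\eta_a^{(h_a)}/\eta_b^{(h_b)}-\eta_b^{(h_b)}/\eta_a^{(h_a)}\right)} .$$ (In particular $\langle\mathbf h|\mathbf h\rangle$ does not depend on $h_{\mathsf N}$ when $\mathsf N$ is even.)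
   Context: Fix integers $\mathsf N\ge1$ and $p\ge3$ odd, and $q\in\mathbb C$ with $q^p=1$ and $q^2$ a primitive $p$-th root of unity. Put $\mathtt e_{\mathsf N}=1$ if $\mathsf N$ is even, $\mathtt e_{\mathsf N}=0$ if $\mathsf N$ is odd, and $[\mathsf N]=\mathsf N-\mathtt e_{\mathsf N}$. Let $\mathcal R$ be a finite-dimensional complex vector space, $\mathcal L$ its dual, $\langle\cdot|\cdot\rangle$ the duality pairing, and $\lambda\mapsto\mathsf A(\lambda),\mathsf B(\lambda)$ families of operators on $\mathcal R$ (acting on $\mathcal L$ from the right by transposition); in the paper they are entries of the monodromy matrix $\mathsf M(\lambda)=\mathsf L_{\mathsf N}(\lambda)\cdots\mathsf L_1(\lambda)=\begin{pmatrix}\mathsf A&\mathsf B\\ \mathsf C&\mathsf D\end{pmatrix}$ of the lattice sine-Gordon model with parameters $\kappa_n,\xi_n\neq0$. Let $\eta_1^{(0)},\dots,\eta_{\mathsf N}^{(0)}$ be nonzero complex numbers, $\eta_a^{(h)}=q^h\eta_a^{(0)}$ (depending only on $h$ mod $p$), and assume $(\eta_a^{(h)})^2\ne(\eta_b^{(h')})^2$ for all $a\ne b$ in $\{1,\dots,[\mathsf N]\}$ and all $h,h'$. Let $\textsc k=\prod_{n=1}^{\mathsf N}\kappa_n/i\neq0$, $\mathbf e_a$ the $a$-th unit vector of $(\mathbb Z/p\mathbb Z)^{\mathsf N}$, and for $\mathbf k\in(\mathbb Z/p\mathbb Z)^{\mathsf N}$ put $\mathsf b_{\mathbf k}(\lambda)=\textsc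 k\,(\eta_{\mathsf N}^{(k_{\mathsf N})})^{\mathtt e_{\mathsf N}}\prod_{a=1}^{[\mathsf N]}(\lambda/\eta_a^{(k_a)}-\eta_a^{(k_a)}/\lambda)$ and $\eta_{\mathbf k,\mathsf A}=\prod_{n=1}^{\mathsf N}\xi_n/\prod_{n=1}^{\mathsf N-1}\eta_n^{(k_n)}$. Let $a,\bar a$ be complex functions with $\bar a(\eta_a^{(j)})\neq0$ for all $a,j$. Left SOV basis: a basis $\{\langle\mathbf k|\}_{\mathbf k\in(\mathbb Z/p\mathbb Z)^{\mathsf N}}$ of $\mathcal L$ with $\langle\mathbf k|\mathsf B(\lambda)=\mathsf b_{\mathbf k}(\lambda)\langle\mathbf k|$ and $$\langle\mathbf k|\mathsf A(\lambda)=\mathtt e_{\mathsf N}\frac{\mathsf b_{\mathbf k}(\lambda)}{\eta_{\mathsf N}^{(k_{\mathsf N})}}\Big(\frac{\lambda}{\eta_{\mathbf k,\mathsf A}}\langle\mathbf k-\mathbf e_{\mathsf N}|-\frac{\eta_{\mathbf k,\mathsf A}}{\lambda}\langle\mathbf k+\mathbf e_{\mathsf N}|\Big)+\sum_{a=1}^{[\mathsf N]}\prod_{b\ne a,\,b\le[\mathsf N]}\frac{\lambda/\eta_b^{(k_b)}-\eta_b^{(k_b)}/\lambda}{\eta_a^{(k_a)}/\eta_b^{(k_b)}-\eta_b^{(k_b)}/\eta_a^{(k_a)}}\,a(\eta_a^{(k_a)})\,\langle\mathbf k-\mathbf e_a|.$$ Right SOV basis: a basis $\{|\mathbf k\rangle\}$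 of $\mathcal R$ with $\mathsf B(\lambda)|\mathbf k\rangle=\mathsf b_{\mathbf k}(\lambda)|\mathbf k\rangle$ and $$\mathsf A(\lambda)|\mathbf k\rangle=\mathtt e_{\mathsf N}\frac{\mathsf b_{\mathbf k}(\lambda)}{\eta_{\mathsf N}^{(k_{\mathsf N})}}\Big(\frac{\lambda}{\eta_{\mathbf k,\mathsf A}}|\mathbf k+\mathbf e_{\mathsf N}\rangle-\frac{\eta_{\mathbf k,\mathsf A}}{\lambda}|\mathbf k-\mathbf e_{\mathsf N}\rangle\Big)+\sum_{a=1}^{[\mathsf N]}|\mathbf k+\mathbf e_a\rangle\prod_{b\ne a,\,b\le[\mathsf N]}\frac{\lambda/\eta_b^{(k_b)}-\eta_b^{(k_b)}/\lambda}{\eta_a^{(k_a)}/\eta_b^{(k_b)}-\eta_b^{(k_b)}/\eta_a^{(k_a)}}\,\bar a(\eta_a^{(k_a)}).$$ *)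

theory Defs
  imports "HOL-Analysis.Analysis"
begin

definition eN :: "nat \<Rightarrow> nat" where
  "eN N = (if even N then 1 else 0)"

definition brN :: "nat \<Rightarrow> nat" where
  "brN N = N - eN N"

text \<open>(Z/pZ)^N, represented by functions k with k a in {0..p-1} for a in {1..N},
  and k a = 0 outside {1..N}.\<close>
definition sov_idx :: "nat \<Rightarrow> nat \<Rightarrow> (nat \<Rightarrow> nat) set" where
  "sov_idx N p = {k. (\<forall>a\<in>{1..N}. k a < p) \<and> (\<forall>a. a \<notin> {1..N} \<longrightarrow> k a = 0)}"

definition kplus :: "nat \<Rightarrow> (nat \<Rightarrow> nat) \<Rightarrow> nat \<Rightarrow> (nat \<Rightarrow> nat)" where
  "kplus p k a = k(a := (k a + 1) mod p)"

definition kminus :: "nat \<Rightarrow> (nat \<Rightarrow> nat) \<Rightarrow> nat \<Rightarrow> (nat \<Rightarrow> nat)" where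
  "kminus p k a = k(a := (k a + p - 1) mod p)"

definition sov_eta :: "complex \<Rightarrow> (nat \<Rightarrow> complex) \<Rightarrow> nat \<Rightarrow> nat \<Rightarrow> complex" where
  "sov_eta q eta0 h a = q ^ h * eta0 a"

definition sov_K :: "nat \<Rightarrow> (nat \<Rightarrow> complex) \<Rightarrow> complex" where
  "sov_K N kappa = (\<Prod>n\<in>{1..N}. kappa n / \<i>)"

definition sov_b :: "nat \<Rightarrow> complex \<Rightarrow> (nat \<Rightarrow> complex) \<Rightarrow> (nat \<Rightarrow> complex)
    \<Rightarrow> (nat \<Rightarrow> nat) \<Rightarrow> complex \<Rightarrow> complex" where
  "sov_b N q eta0 kappa k lam =
     sov_K N kappa * (sov_eta q eta0 (k N) N) ^ eN N *
     (\<Prod>a\<in>{1..brN N}. lam / sov_eta q eta0 (k a) a - sov_eta q eta0 (k a) a / lam)"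

definition sov_etaA :: "nat \<Rightarrow> complex \<Rightarrow> (nat \<Rightarrow> complex) \<Rightarrow> (nat \<Rightarrow> complex)
    \<Rightarrow> (nat \<Rightarrow> nat) \<Rightarrow> complex" where
  "sov_etaA N q eta0 xi k =
     (\<Prod>n\<in>{1..N}. xi n) / (\<Prod>n\<in>{1..N-1}. sov_eta q eta0 (k n) n)"

definition sov_coef :: "nat \<Rightarrow> complex \<Rightarrow> (nat \<Rightarrow> complex) \<Rightarrow> (nat \<Rightarrow> nat)
    \<Rightarrow> nat \<Rightarrow> complex \<Rightarrow> complex" where
  "sov_coef N q eta0 k a lam =
     (\<Prod>b\<in>{1..brN N} - {a}.
        (lam / sov_eta q eta0 (k b) b - sov_eta q eta0 (k b) b / lam) /
        (sov_eta q eta0 (k a) a / sov_eta q eta0 (k b) b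
           - sov_eta q eta0 (k b) b / sov_eta q eta0 (k a) a))"

text \<open>Duality pairing between L = C^n (row vectors) and R = C^n (column vectors).\<close>
definition pairing :: "complex ^ 'n \<Rightarrow> complex ^ 'n \<Rightarrow> complex" where
  "pairing l v = (\<Sum>i\<in>UNIV. l $ i * v $ i)"

definition is_basis_family :: "'i set \<Rightarrow> ('i \<Rightarrow> complex ^ 'n) \<Rightarrow> bool" where
  "is_basis_family I f \<longleftrightarrow> finite I \<and> card I = CARD('n) \<and>
     (\<forall>c. (\<Sum>k\<in>I. c k *s f k) = 0 \<longrightarrow> (\<forall>k\<in>I. c k = 0))"

end

theory Submission
  imports Defs
begin


lemma pairing_add_left: "pairing (x + y) z = pairing x z + pairing y z"
  by (simp add: pairing_def distrib_right sum.distrib)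
lemma pairing_diff_left: "pairing (x - y) z = pairing x z - pairing y z"
  by (simp add: pairing_def left_diff_distrib sum_subtractf)
lemma pairing_scale_left: "pairing (c *s x) z = c * pairing x z"
  by (simp add: pairing_def sum_distrib_left mult.assoc)
lemma pairing_zero_left: "pairing 0 z = 0"
  by (simp add: pairing_def)
lemma pairing_sum_left: "pairing (sum f S) z = (\<Sum>i\<in>S. pairing (f i) z)"
  by (induction S rule: infinite_finite_induct) (simp_all add: pairing_add_left pairing_zero_left)
lemma pairing_add_right: "pairing z (x + y) = pairing z x + pairing z y"
  by (simp add: pairing_def distrib_left sum.distrib)
lemma pairing_diff_right: "pairing z (x - y) = pairing z x - pairing z y"
  by (simp add: pairing_def right_diff_distrib sum_subtractf)
lemma pairing_scale_right: "pairing z (c *s x) = c * pairing z x"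
  by (simp add: pairing_def sum_distrib_left mult.left_commute)
lemma pairing_zero_right: "pairing z 0 = 0"
  by (simp add: pairing_def)
lemma pairing_sum_right: "pairing z (sum f S) = (\<Sum>i\<in>S. pairing z (f i))"
  by (induction S rule: infinite_finite_induct) (simp_all add: pairing_add_right pairing_zero_right)
lemma pairing_vm: "pairing (x v* A) y = pairing x (A *v y)"
  unfolding pairing_def vector_matrix_mult_def matrix_vector_mult_def
  by (simp add: sum_distrib_left sum_distrib_right mult_ac) (rule sum.swap)




definition ff :: "complex \<Rightarrow> complex \<Rightarrow> complex" where "ff x y = x / y - y / x"

lemma ff_anti: "ff y x = - ff x y" by (simp add: ff_def)

lemma ff_zero_iff: "x \<noteq> 0 \<Longrightarrow> y \<noteq> 0 \<Longrightarrow> ff x y = 0 \<longleftrightarrow> x^2 = y^2"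
  by (simp add: ff_def field_simps power2_eq_square)

definition Vd :: "nat \<Rightarrow> (nat \<Rightarrow> complex) \<Rightarrow> complex" where
  "Vd M x = (\<Prod>a\<in>{1..M}. \<Prod>b\<in>{1..<a}. ff (x a) (x b))"

definition Den :: "nat \<Rightarrow> (nat \<Rightarrow> complex) \<Rightarrow> nat \<Rightarrow> complex" where
  "Den M x c = (\<Prod>b\<in>{1..M}-{c}. ff (x c) (x b))"

lemma Pc_prod:
  assumes c: "c \<in> {1..M}"
  shows "prod (\<lambda>(a,b). ff (x a) (x b)) ({c} \<times> {1..<c} \<union> (\<lambda>a. (a,c)) ` {c<..M})
         = (-1)^(M-c) * Den M x c"
proof -
  have disj: "({c} \<times> {1..<c}) \<inter> (\<lambda>a. (a,c)) ` {c<..M} = {}" by auto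
  have 1: "prod (\<lambda>(a,b). ff (x a) (x b)) ({c} \<times> {1..<c}) = (\<Prod>b\<in>{1..<c}. ff (x c) (x b))"
  proof -
    have "{c} \<times> {1..<c} = (\<lambda>b. (c,b)) ` {1..<c}" by auto
    moreover have "inj_on (\<lambda>b. (c,b)) {1..<c}" by (auto simp: inj_on_def)
    ultimately show ?thesis by (simp add: prod.reindex)
  qed
  have 2: "prod (\<lambda>(a,b). ff (x a) (x b)) ((\<lambda>a. (a,c)) ` {c<..M}) = (\<Prod>a\<in>{c<..M}. ff (x a) (x c))"
    by (subst prod.reindex) (auto simp: inj_on_def)
  have 3: "(\<Prod>a\<in>{c<..M}. ff (x a) (x c)) = (-1)^(M-c) * (\<Prod>a\<in>{c<..M}. ff (x c) (x a))"
  proof -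
    have "(\<Prod>a\<in>{c<..M}. ff (x a) (x c)) = (\<Prod>a\<in>{c<..M}. (-1) * ff (x c) (x a))"
      by (rule prod.cong) (auto simp: ff_anti[of "x a" "x c" for a])
    also have "\<dots> = (-1)^(M-c) * (\<Prod>a\<in>{c<..M}. ff (x c) (x a))"
      by (simp only: prod.distrib prod_constant card_greaterThanAtMost)
    finally show ?thesis .
  qed
  have 4: "Den M x c = (\<Prod>b\<in>{1..<c}. ff (x c) (x b)) * (\<Prod>a\<in>{c<..M}. ff (x c) (x a))"
  proof -
    have e: "{1..M}-{c} = {1..<c} \<union> {c<..M}" using c by auto
    have d: "{1..<c} \<inter> {c<..M} = {}" by auto
    show ?thesis unfolding Den_def e
      using prod.union_disjoint[OF finite_atLeastLessThan finite_greaterThanAtMost d] .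

  qed
  show ?thesis
    by (subst prod.union_disjoint) (use disj 1 2 3 4 in auto)
qed

lemma Vd_Den:
  assumes c: "c \<in> {1..M}" and xy: "\<And>b. b \<noteq> c \<Longrightarrow> x b = y b"
  shows "Vd M x * Den M y c = Vd M y * Den M x c"
proof -
  define P where "P = Sigma {1..M} (\<lambda>a. {1..<a})"
  define Pc where "Pc = {c} \<times> {1..<c} \<union> (\<lambda>a. (a,c)) ` {c<..M}"
  have PcP: "Pc \<subseteq> P" using c by (auto simp: P_def Pc_def)
  have fP: "finite P" by (simp add: P_def)
  have V: "Vd M z = prod (\<lambda>(a,b). ff (z a) (z b)) Pc * prod (\<lambda>(a,b). ff (z a) (z b)) (P - Pc)" for z
  proof -
    have "Vd M z = prod (\<lambda>(a,b). ff (z a) (z b)) P"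
      unfolding Vd_def P_def by (simp add: prod.Sigma)
    also have "\<dots> = prod (\<lambda>(a,b). ff (z a) (z b)) Pc * prod (\<lambda>(a,b). ff (z a) (z b)) (P - Pc)"
      using prod.subset_diff[OF PcP fP] by (simp add: mult.commute)
    finally show ?thesis .
  qed
  have o: "prod (\<lambda>(a,b). ff (x a) (x b)) (P - Pc) = prod (\<lambda>(a,b). ff (y a) (y b)) (P - Pc)"
  proof (rule prod.cong)
    fix ab assume "ab \<in> P - Pc"
    moreover obtain a b where ab0: "ab = (a,b)" by (cases ab)
    ultimately have "(a,b) \<in> P - Pc" by simp
    then have ab: "ab = (a,b)" "a \<noteq> c" "b \<noteq> c" using ab0
      by (auto simp: P_def Pc_def image_iff)
    then show "(case ab of (a,b) \<Rightarrow> ff (x a) (x b)) = (case ab of (a,b) \<Rightarrow> ff (y a) (y b))"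
      using xy by simp
  qed simp
  have pc: "prod (\<lambda>(a,b). ff (z a) (z b)) Pc = (-1)^(M-c) * Den M z c" for z
    unfolding Pc_def by (rule Pc_prod[OF c])
  show ?thesis
    unfolding V[of x] V[of y] o pc
    by (simp add: mult_ac)
qed




lemma generic_lam:
  fixes y :: "nat \<Rightarrow> complex"
  assumes "finite B" "\<forall>b\<in>B. y b \<noteq> 0"
  shows "\<exists>lam. lam \<noteq> 0 \<and> (\<forall>b\<in>B. lam / y b - y b / lam \<noteq> 0)"
proof -
  have fin: "finite (insert 0 (y ` B \<union> uminus ` y ` B))" using assms by simp
  obtain lam where lam: "lam \<notin> insert 0 (y ` B \<union> uminus ` y ` B)"
    using ex_new_if_finite[OF infinite_UNIV_char_0 fin] by blast
  have "\<forall>b\<in>B. lam / y b - y b / lam \<noteq> 0"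
  proof
    fix b assume b: "b \<in> B"
    have "lam \<noteq> y b" "lam \<noteq> - y b" using lam b by (auto simp: image_iff)
    then have "lam^2 \<noteq> (y b)^2" by (auto simp: power2_eq_iff)
    then show "lam / y b - y b / lam \<noteq> 0"
      using ff_zero_iff[of lam "y b"] assms b lam by (auto simp: ff_def)
  qed
  then show ?thesis using lam by auto
qed

lemma eN_cases: "(odd N \<and> eN N = 0 \<and> brN N = N) \<or> (even N \<and> eN N = 1 \<and> brN N = N - 1)"
  by (auto simp: eN_def brN_def)

locale sov =
  fixes N p :: nat and q :: complex
    and eta0 kappa xi :: "nat \<Rightarrow> complex"
    and aa abar :: "complex \<Rightarrow> complex"
    and Aop Bop :: "complex \<Rightarrow> complex ^ 'n ^ 'n"
    and Lb Rb :: "(nat \<Rightarrow> nat) \<Rightarrow> complex ^ 'n"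
  assumes N_ge: "N \<ge> 1"
    and p_ge: "p \<ge> 3" and p_odd: "odd p"
    and q_p: "q ^ p = 1"
    and q2_prim: "\<forall>m. 0 < m \<and> m < p \<longrightarrow> (q ^ 2) ^ m \<noteq> 1"
    and kappa_nz: "\<forall>n\<in>{1..N}. kappa n \<noteq> 0"
    and xi_nz: "\<forall>n\<in>{1..N}. xi n \<noteq> 0"
    and eta0_nz: "\<forall>a\<in>{1..N}. eta0 a \<noteq> 0"
    and eta_dist: "\<forall>a\<in>{1..brN N}. \<forall>b\<in>{1..brN N}. a \<noteq> b \<longrightarrow>
        (\<forall>h h'. (sov_eta q eta0 h a)\<^sup>2 \<noteq> (sov_eta q eta0 h' b)\<^sup>2)"
    and abar_nz: "\<forall>a\<in>{1..N}. \<forall>j. abar (sov_eta q eta0 j a) \<noteq> 0"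
    and L_basis: "is_basis_family (sov_idx N p) Lb"
    and R_basis: "is_basis_family (sov_idx N p) Rb"
    and L_B: "\<And>k lam. k \<in> sov_idx N p \<Longrightarrow> lam \<noteq> 0 \<Longrightarrow>
        Lb k v* Bop lam = sov_b N q eta0 kappa k lam *s Lb k"
    and L_A: "\<And>k lam. k \<in> sov_idx N p \<Longrightarrow> lam \<noteq> 0 \<Longrightarrow>
        Lb k v* Aop lam =
          (of_nat (eN N) * sov_b N q eta0 kappa k lam / sov_eta q eta0 (k N) N) *s
            ((lam / sov_etaA N q eta0 xi k) *s Lb (kminus p k N)
             - (sov_etaA N q eta0 xi k / lam) *s Lb (kplus p k N))
          + (\<Sum>a\<in>{1..brN N}.
               (sov_coef N q eta0 k a lam * aa (sov_eta q eta0 (k a) a)) *s Lb (kminus p k a))"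
    and R_B: "\<And>k lam. k \<in> sov_idx N p \<Longrightarrow> lam \<noteq> 0 \<Longrightarrow>
        Bop lam *v Rb k = sov_b N q eta0 kappa k lam *s Rb k"
    and R_A: "\<And>k lam. k \<in> sov_idx N p \<Longrightarrow> lam \<noteq> 0 \<Longrightarrow>
        Aop lam *v Rb k =
          (of_nat (eN N) * sov_b N q eta0 kappa k lam / sov_eta q eta0 (k N) N) *s
            ((lam / sov_etaA N q eta0 xi k) *s Rb (kplus p k N)
             - (sov_etaA N q eta0 xi k / lam) *s Rb (kminus p k N))
          + (\<Sum>a\<in>{1..brN N}.
               (sov_coef N q eta0 k a lam * abar (sov_eta q eta0 (k a) a)) *s Rb (kplus p k a))"
begin

abbreviation "M \<equiv> brN N"
abbreviation "x k a \<equiv> sov_eta q eta0 (k a) a"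

lemma q_nz: "q \<noteq> 0" using q_p p_ge by (cases "q = 0") (auto simp: power_0_left)

lemma q2_inj: assumes "i < p" "j < p" "(q^2)^i = (q^2)^j" shows "i = j"
proof -
  have *: "i \<le> j \<Longrightarrow> (q^2)^i = (q^2)^j \<Longrightarrow> j < p \<Longrightarrow> i = j" for i j
  proof (rule ccontr)
    assume h: "i \<le> j" "(q^2)^i = (q^2)^j" "j < p" "i \<noteq> j"
    have "(q^2)^j = (q^2)^i * (q^2)^(j-i)" using h by (metis le_add_diff_inverse power_add)
    then have "(q^2)^(j-i) = 1" using h q_nz by simp
    moreover have "0 < j - i" "j - i < p" using h by auto
    ultimately show False using q2_prim by blast
  qed
  show ?thesis using *[of i j] *[of j i] assms by (metis nat_le_linear)
qed

lemma eta_nz: "a \<in> {1..N} \<Longrightarrow> sov_eta q eta0 j a \<noteq> 0"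
  using eta0_nz q_nz by (simp add: sov_eta_def)

lemma eta_sq_inj:
  assumes "a \<in> {1..N}" "i < p" "j < p" "(sov_eta q eta0 i a)^2 = (sov_eta q eta0 j a)^2"
  shows "i = j"
proof -
  have "(q^2)^i * (eta0 a)^2 = (q^2)^j * (eta0 a)^2"
    using assms(4) by (simp add: sov_eta_def power_mult_distrib flip: power_mult) (simp add: mult.commute)
  then have "(q^2)^i = (q^2)^j" using eta0_nz assms(1) by simp
  then show ?thesis using q2_inj assms by blast
qed

lemma eta_inj:
  assumes "a \<in> {1..N}" "i < p" "j < p" "sov_eta q eta0 i a = sov_eta q eta0 j a"
  shows "i = j"
  using eta_sq_inj[OF assms(1-3)] assms(4) by simp

lemma M_le: "M \<le> N" by (simp add: brN_def)

lemma K_nz: "sov_K N kappa \<noteq> 0"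
  using kappa_nz by (simp add: sov_K_def)

lemma idx_lt: "k \<in> sov_idx N p \<Longrightarrow> a \<in> {1..N} \<Longrightarrow> k a < p"
  by (simp add: sov_idx_def)

lemma idx_out: "k \<in> sov_idx N p \<Longrightarrow> a \<notin> {1..N} \<Longrightarrow> k a = 0"
  by (simp add: sov_idx_def)

lemma upd_idx: "k \<in> sov_idx N p \<Longrightarrow> a \<in> {1..N} \<Longrightarrow> v < p \<Longrightarrow> k(a := v) \<in> sov_idx N p"
  unfolding sov_idx_def by auto
lemma kplus_idx: "k \<in> sov_idx N p \<Longrightarrow> a \<in> {1..N} \<Longrightarrow> kplus p k a \<in> sov_idx N p"
  unfolding kplus_def by (rule upd_idx) (use p_ge in auto)
lemma kminus_idx: "k \<in> sov_idx N p \<Longrightarrow> a \<in> {1..N} \<Longrightarrow> kminus p k a \<in> sov_idx N p"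
  unfolding kminus_def by (rule upd_idx) (use p_ge in auto)

lemma pairing_B:
  assumes "k \<in> sov_idx N p" "h \<in> sov_idx N p" "lam \<noteq> 0"
  shows "sov_b N q eta0 kappa k lam * pairing (Lb k) (Rb h) = sov_b N q eta0 kappa h lam * pairing (Lb k) (Rb h)"
proof -
  have "pairing (Lb k v* Bop lam) (Rb h) = pairing (Lb k) (Bop lam *v Rb h)" by (rule pairing_vm)
  then show ?thesis using L_B[OF assms(1,3)] R_B[OF assms(2,3)]
    by (simp add: pairing_scale_left pairing_scale_right)
qed

lemma ortho:
  assumes k: "k \<in> sov_idx N p" and h: "h \<in> sov_idx N p" and kh: "k \<noteq> h"
  shows "pairing (Lb k) (Rb h) = 0"
proof -
  have "\<exists>lam. lam \<noteq> 0 \<and> sov_b N q eta0 kappa k lam \<noteq> sov_b N q eta0 kappa h lam"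
  proof (cases "\<exists>a\<in>{1..M}. k a \<noteq> h a")
    case True
    then obtain a where a: "a \<in> {1..M}" "k a \<noteq> h a" by blast
    have aN: "a \<in> {1..N}" using a M_le by auto
    define lam where "lam = x k a"
    have lam0: "lam \<noteq> 0" using eta_nz[OF aN] by (simp add: lam_def)
    have "sov_b N q eta0 kappa k lam = 0"
      unfolding sov_b_def using a lam0 by (auto simp: lam_def)
    moreover have "sov_b N q eta0 kappa h lam \<noteq> 0"
    proof -
      have NN: "N \<in> {1..N}" using N_ge by auto
      have "\<forall>b\<in>{1..M}. lam / x h b - x h b / lam \<noteq> 0"
      proof
        fix b assume b: "b \<in> {1..M}"
        then have bN: "b \<in> {1..N}" using M_le by auto
        have "lam^2 \<noteq> (x h b)^2"
        proof (cases "b = a")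
          case True
          then show ?thesis using eta_sq_inj[OF aN idx_lt[OF k aN] idx_lt[OF h aN]] a
            by (auto simp: lam_def)
        next
          case False
          then show ?thesis using eta_dist a b by (auto simp: lam_def)
        qed
        then show "lam / x h b - x h b / lam \<noteq> 0"
          using ff_zero_iff[OF lam0 eta_nz[OF bN]] by (simp add: ff_def)
      qed
      then show ?thesis unfolding sov_b_def using K_nz eta_nz[OF NN] by simp
    qed
    ultimately show ?thesis using lam0 by metis
  next
    case False
    then have agree: "\<forall>a\<in>{1..M}. k a = h a" by blast
    obtain a where a: "k a \<noteq> h a" using kh by blast
    have aN: "a \<in> {1..N}" by (rule ccontr) (use a idx_out[OF k] idx_out[OF h] in auto)
    have nM: "a \<notin> {1..M}" using agree a by auto
    have evN: "even N \<and> eN N = 1 \<and> M = N - 1" using eN_cases[of N] aN nM by auto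
    then have ev: "even N" "eN N = 1" "M = N - 1" by auto
    have aeq: "a = N" using aN nM ev(3) by auto
    have NN: "N \<in> {1..N}" using N_ge by auto
    obtain lam where lam: "lam \<noteq> 0" "\<forall>b\<in>{1..M}. lam / x k b - x k b / lam \<noteq> 0"
      using generic_lam[of "{1..M}" "\<lambda>b. x k b"] eta_nz M_le by force
    define P where "P = (\<Prod>b\<in>{1..M}. lam / x k b - x k b / lam)"
    have P0: "P \<noteq> 0" using lam by (simp add: P_def)
    have Ph: "(\<Prod>b\<in>{1..M}. lam / x h b - x h b / lam) = P"
      unfolding P_def using agree by (intro prod.cong) auto
    have xne: "x k N \<noteq> x h N"
      using eta_inj[OF NN idx_lt[OF k NN] idx_lt[OF h NN]] a aeq by auto
    have "sov_b N q eta0 kappa k lam \<noteq> sov_b N q eta0 kappa h lam"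
      unfolding sov_b_def Ph P_def[symmetric] using ev K_nz P0 xne by simp
    then show ?thesis using lam by blast
  qed
  then obtain lam where "lam \<noteq> 0" "sov_b N q eta0 kappa k lam \<noteq> sov_b N q eta0 kappa h lam" by blast
  then show ?thesis using pairing_B[OF k h] by auto
qed

end



lemma sum_single:
  assumes "finite S" "a \<in> S" "\<forall>b\<in>S - {a}. g b = 0"
  shows "sum g S = (g a :: complex)"
  using assms by (simp add: sum.remove)

context sov begin

lemma kminus_ne_at:
  assumes k: "k \<in> sov_idx N p" and b: "b \<in> {1..N}"
  shows "kminus p k b b \<noteq> k b"
proof -
  have lt: "k b < p" using idx_lt[OF k b] .
  show ?thesis
  proof (cases "k b = 0")
    case True then show ?thesis using p_ge by (simp add: kminus_def)
  next
    case False
    then have e: "k b + p - 1 = (k b - 1) + p" by simp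
    have "(k b + p - 1) mod p = (k b - 1) mod p" by (simp only: e mod_add_self2)
    also have "\<dots> = k b - 1" using lt by simp
    finally have "(k b + p - 1) mod p = k b - 1" .
    then show ?thesis using False by (simp add: kminus_def)
  qed
qed

lemma kplus_ne_at:
  assumes k: "k \<in> sov_idx N p" and b: "b \<in> {1..N}"
  shows "kplus p k b b \<noteq> k b"
proof -
  have lt: "k b < p" using idx_lt[OF k b] .
  show ?thesis
  proof (cases "k b + 1 < p")
    case True then show ?thesis by (simp add: kplus_def)
  next
    case False
    then have "k b + 1 = p" using lt by simp
    then show ?thesis using p_ge by (simp add: kplus_def)
  qed
qed

lemma kminus_ne:
  "k \<in> sov_idx N p \<Longrightarrow> b \<in> {1..N} \<Longrightarrow> k' b = k b \<Longrightarrow> kminus p k b \<noteq> k'"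
  using kminus_ne_at by metis

lemma kplus_ne:
  "k \<in> sov_idx N p \<Longrightarrow> b \<in> {1..N} \<Longrightarrow> k' b = k b \<Longrightarrow> kplus p k b \<noteq> k'"
  using kplus_ne_at by metis

lemma coef_eq:
  "sov_coef N q eta0 k a lam =
     (\<Prod>b\<in>{1..M}-{a}. lam / x k b - x k b / lam) / Den M (\<lambda>b. x k b) a"
  unfolding sov_coef_def Den_def ff_def by (simp add: prod_dividef)

lemma Den_nz:
  assumes a: "a \<in> {1..M}"
  shows "Den M (\<lambda>b. x k b) a \<noteq> 0"
proof -
  have "\<forall>b\<in>{1..M}-{a}. ff (x k a) (x k b) \<noteq> 0"
  proof
    fix b assume b: "b \<in> {1..M}-{a}"
    have aN: "a \<in> {1..N}" "b \<in> {1..N}" using a b M_le by auto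
    show "ff (x k a) (x k b) \<noteq> 0"
      using ff_zero_iff[OF eta_nz[OF aN(1)] eta_nz[OF aN(2)]] eta_dist a b by auto
  qed
  then show ?thesis unfolding Den_def by simp
qed

lemma Vd_nz: "Vd M (\<lambda>b. x k b) \<noteq> 0"
proof -
  have "\<forall>a\<in>{1..M}. \<forall>b\<in>{1..<a}. ff (x k a) (x k b) \<noteq> 0"
  proof (intro ballI)
    fix a b assume a: "a \<in> {1..M}" and b: "b \<in> {1..<a}"
    have aN: "a \<in> {1..N}" "b \<in> {1..N}" using a b M_le by auto
    have "b \<in> {1..M}" "a \<noteq> b" using a b by auto
    then show "ff (x k a) (x k b) \<noteq> 0"
      using ff_zero_iff[OF eta_nz[OF aN(1)] eta_nz[OF aN(2)]] eta_dist a by auto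
  qed
  then show ?thesis unfolding Vd_def by simp
qed

lemma rec_a:
  assumes k: "k \<in> sov_idx N p" and a: "a \<in> {1..M}" and ka: "1 \<le> k a"
  defines "k' \<equiv> k(a := k a - 1)"
  shows "pairing (Lb k) (Rb k) * Vd M (\<lambda>b. x k b) =
         pairing (Lb k') (Rb k') * Vd M (\<lambda>b. x k' b) *
           (aa (sov_eta q eta0 (k a) a) / abar (sov_eta q eta0 (k a - 1) a))"
proof -
  have aN: "a \<in> {1..N}" using a M_le by auto
  have lt: "k a < p" using idx_lt[OF k aN] .
  have k'i: "k' \<in> sov_idx N p" unfolding k'_def by (rule upd_idx[OF k aN]) (use lt in auto)
  have km: "kminus p k a = k'"
  proof -
    have e: "k a + p - 1 = (k a - 1) + p" using ka by simp
    have "(k a + p - 1) mod p = (k a - 1) mod p" by (simp only: e mod_add_self2)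
    also have "\<dots> = k a - 1" using lt by simp
    finally have "(k a + p - 1) mod p = k a - 1" .
    then show ?thesis by (simp add: kminus_def k'_def)
  qed
  have kp: "kplus p k' a = k"
  proof -
    have "(k a - 1 + 1) mod p = k a" using ka lt by simp
    then show ?thesis by (auto simp: kplus_def k'_def)
  qed
  have k'a: "k' a = k a - 1" by (simp add: k'_def)
  have k'o: "\<And>b. b \<noteq> a \<Longrightarrow> k' b = k b" by (simp add: k'_def)
  have NN: "N \<in> {1..N}" using N_ge by auto
  define Num where "Num lam = (\<Prod>b\<in>{1..M}-{a}. lam / x k b - x k b / lam)" for lam
  have Num': "(\<Prod>b\<in>{1..M}-{a}. lam / x k' b - x k' b / lam) = Num lam" for lam
    unfolding Num_def by (rule prod.cong) (auto simp: k'o)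
  obtain lam where lam0: "lam \<noteq> 0" and lamN: "\<forall>b\<in>{1..M}-{a}. lam / x k b - x k b / lam \<noteq> 0"
    using generic_lam[of "{1..M}-{a}" "\<lambda>b. x k b"] eta_nz M_le by force
  have Num0: "Num lam \<noteq> 0" using lamN by (simp add: Num_def)
  have L: "pairing (Lb k v* Aop lam) (Rb k') = sov_coef N q eta0 k a lam * aa (x k a) * pairing (Lb k') (Rb k')"
  proof -
    have E: "(of_nat (eN N) * sov_b N q eta0 kappa k lam / sov_eta q eta0 (k N) N) *
              ((lam / sov_etaA N q eta0 xi k) * pairing (Lb (kminus p k N)) (Rb k')
               - (sov_etaA N q eta0 xi k / lam) * pairing (Lb (kplus p k N)) (Rb k')) = 0"
    proof (cases "odd N")
      case True then show ?thesis using eN_cases[of N] by auto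
    next
      case False
      then have "M = N - 1" using eN_cases[of N] by auto
      then have "a \<noteq> N" using a by auto
      then have "k' N = k N" by (simp add: k'o)
      then show ?thesis using ortho[OF kminus_idx[OF k NN] k'i kminus_ne[OF k NN]]
          ortho[OF kplus_idx[OF k NN] k'i kplus_ne[OF k NN]] by simp
    qed
    have S: "(\<Sum>a'\<in>{1..M}. sov_coef N q eta0 k a' lam * aa (x k a') * pairing (Lb (kminus p k a')) (Rb k'))
             = sov_coef N q eta0 k a lam * aa (x k a) * pairing (Lb k') (Rb k')"
    proof (subst sum_single[of _ a])
      show "\<forall>b\<in>{1..M} - {a}. sov_coef N q eta0 k b lam * aa (x k b) * pairing (Lb (kminus p k b)) (Rb k') = 0"
      proof
        fix b assume b: "b \<in> {1..M} - {a}"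
        then have bN: "b \<in> {1..N}" using M_le by auto
        have "k' b = k b" using b k'o by auto
        then show "sov_coef N q eta0 k b lam * aa (x k b) * pairing (Lb (kminus p k b)) (Rb k') = 0"
          using ortho[OF kminus_idx[OF k bN] k'i kminus_ne[OF k bN]] by simp
      qed
    qed (use a km in auto)
    show ?thesis
      unfolding L_A[OF k lam0] pairing_add_left pairing_diff_left pairing_scale_left pairing_sum_left E S
      by simp
  qed
  have R: "pairing (Lb k) (Aop lam *v Rb k') = sov_coef N q eta0 k' a lam * abar (x k' a) * pairing (Lb k) (Rb k)"
  proof -
    have E: "(of_nat (eN N) * sov_b N q eta0 kappa k' lam / sov_eta q eta0 (k' N) N) *
              ((lam / sov_etaA N q eta0 xi k') * pairing (Lb k) (Rb (kplus p k' N))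
               - (sov_etaA N q eta0 xi k' / lam) * pairing (Lb k) (Rb (kminus p k' N))) = 0"
    proof (cases "odd N")
      case True then show ?thesis using eN_cases[of N] by auto
    next
      case False
      then have "M = N - 1" using eN_cases[of N] by auto
      then have "a \<noteq> N" using a by auto
      then have "k N = k' N" by (simp add: k'o)
      then show ?thesis using ortho[OF k kplus_idx[OF k'i NN] kplus_ne[OF k'i NN, THEN not_sym]]
          ortho[OF k kminus_idx[OF k'i NN] kminus_ne[OF k'i NN, THEN not_sym]] by simp
    qed
    have S: "(\<Sum>a'\<in>{1..M}. sov_coef N q eta0 k' a' lam * abar (x k' a') * pairing (Lb k) (Rb (kplus p k' a')))
             = sov_coef N q eta0 k' a lam * abar (x k' a) * pairing (Lb k) (Rb k)"
    proof (subst sum_single[of _ a])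
      show "\<forall>b\<in>{1..M} - {a}. sov_coef N q eta0 k' b lam * abar (x k' b) * pairing (Lb k) (Rb (kplus p k' b)) = 0"
      proof
        fix b assume b: "b \<in> {1..M} - {a}"
        then have bN: "b \<in> {1..N}" using M_le by auto
        have "k b = k' b" using b k'o by auto
        then show "sov_coef N q eta0 k' b lam * abar (x k' b) * pairing (Lb k) (Rb (kplus p k' b)) = 0"
          using ortho[OF k kplus_idx[OF k'i bN] kplus_ne[OF k'i bN, THEN not_sym]] by simp
      qed
    qed (use a kp in auto)
    show ?thesis
      unfolding R_A[OF k'i lam0] pairing_add_right pairing_diff_right pairing_scale_right pairing_sum_right E S
      by simp
  qed
  define D where "D = Den M (\<lambda>b. x k b) a"
  define D' where "D' = Den M (\<lambda>b. x k' b) a"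
  define A where "A = aa (sov_eta q eta0 (k a) a)"
  define B where "B = abar (sov_eta q eta0 (k a - 1) a)"
  define P where "P = pairing (Lb k) (Rb k)"
  define P' where "P' = pairing (Lb k') (Rb k')"
  define V where "V = Vd M (\<lambda>b. x k b)"
  define V' where "V' = Vd M (\<lambda>b. x k' b)"
  have D0: "D \<noteq> 0" "D' \<noteq> 0" using Den_nz[OF a] by (auto simp: D_def D'_def)
  have B0: "B \<noteq> 0" using abar_nz aN by (simp add: B_def)
  have c1: "sov_coef N q eta0 k a lam = Num lam / D" by (simp only: coef_eq Num_def D_def)
  have c2: "sov_coef N q eta0 k' a lam = Num lam / D'" by (simp only: coef_eq Num' D'_def)
  have xa: "x k' a = sov_eta q eta0 (k a - 1) a" by (simp add: k'a)
  have "sov_coef N q eta0 k a lam * aa (x k a) * P' = sov_coef N q eta0 k' a lam * abar (x k' a) * P"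
    using L R pairing_vm[of "Lb k" "Aop lam" "Rb k'"] by (simp add: P_def P'_def)
  then have "Num lam / D * A * P' = Num lam / D' * B * P"
    unfolding c1 c2 xa A_def B_def .
  then have eq1: "A * P' * D' = B * P * D" using Num0 D0 by (simp add: field_simps)
  have eqV: "V * D' = V' * D" unfolding V_def V'_def D_def D'_def
    by (rule Vd_Den[OF a]) (simp add: k'o)
  have "P * V * (B * D') = P' * V' * A * D'"
  proof -
    have "P * V * (B * D') = P * B * (V * D')" by (simp add: mult_ac)
    also have "\<dots> = V' * (B * P * D)" unfolding eqV by (simp add: mult_ac)
    also have "\<dots> = V' * (A * P' * D')" by (simp add: eq1)
    finally show ?thesis by (simp add: mult_ac)
  qed
  then have "P * V = P' * V' * (A / B)" using B0 D0 by (simp add: field_simps)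
  then show ?thesis by (simp add: P_def P'_def V_def V'_def A_def B_def)
qed

lemma rec_N:
  assumes k: "k \<in> sov_idx N p" and ev: "even N" and kN: "1 \<le> k N"
  defines "k' \<equiv> k(N := k N - 1)"
  shows "pairing (Lb k) (Rb k) = pairing (Lb k') (Rb k')"
proof -
  have NN: "N \<in> {1..N}" using N_ge by auto
  have evs: "eN N = 1" "M = N - 1" using ev eN_cases[of N] by auto
  have lt: "k N < p" using idx_lt[OF k NN] .
  have k'i: "k' \<in> sov_idx N p" unfolding k'_def by (rule upd_idx[OF k NN]) (use lt in auto)
  have k'o: "\<And>b. b \<noteq> N \<Longrightarrow> k' b = k b" by (simp add: k'_def)
  have k'N: "k' N = k N - 1" by (simp add: k'_def)
  have km: "kminus p k N = k'"
  proof -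
    have e: "k N + p - 1 = (k N - 1) + p" using kN by simp
    have "(k N + p - 1) mod p = (k N - 1) mod p" by (simp only: e mod_add_self2)
    also have "\<dots> = k N - 1" using lt by simp
    finally have "(k N + p - 1) mod p = k N - 1" .
    then show ?thesis by (simp add: kminus_def k'_def)
  qed
  have kp: "kplus p k' N = k"
  proof -
    have "(k N - 1 + 1) mod p = k N" using kN lt by simp
    then show ?thesis by (auto simp: kplus_def k'_def)
  qed
  have ne1: "kplus p k N \<noteq> k'"
  proof
    assume h: "kplus p k N = k'"
    then have h2: "(k N + 1) mod p = k N - 1" using k'N by (metis fun_upd_same kplus_def)
    show False
    proof (cases "k N + 1 < p")
      case True then show False using h2 kN by simp
    next
      case False
      then have "k N + 1 = p" using lt by simp
      then show False using h2 p_ge by simp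
    qed
  qed
  have ne2: "kminus p k' N \<noteq> k"
  proof
    assume h: "kminus p k' N = k"
    then have h2: "(k N - 1 + p - 1) mod p = k N" using k'N by (metis fun_upd_same kminus_def)
    show False
    proof (cases "k N = 1")
      case True
      then have "(k N - 1 + p - 1) mod p = p - 1" using p_ge by simp
      then show False using h2 True p_ge by simp
    next
      case False
      then have e: "k N - 1 + p - 1 = (k N - 2) + p" using kN by simp
      have "(k N - 1 + p - 1) mod p = (k N - 2) mod p" by (simp only: e mod_add_self2)
      also have "\<dots> = k N - 2" using lt by simp
      finally show False using h2 kN by simp
    qed
  qed
  define Pi where "Pi k lam = (\<Prod>a\<in>{1..M}. lam / x k a - x k a / lam)" for k lam
  have Pi': "Pi k' lam = Pi k lam" for lam
    unfolding Pi_def by (rule prod.cong) (use evs in \<open>auto simp: k'o\<close>)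
  have bq: "sov_b N q eta0 kappa j lam / sov_eta q eta0 (j N) N = sov_K N kappa * Pi j lam" for j lam
    unfolding sov_b_def Pi_def using evs eta_nz[OF NN] by simp
  have eA: "sov_etaA N q eta0 xi k' = sov_etaA N q eta0 xi k"
    unfolding sov_etaA_def by (rule arg_cong[where f="\<lambda>z. _ / z"], rule prod.cong) (auto simp: k'o)
  have eA0: "sov_etaA N q eta0 xi k \<noteq> 0"
  proof -
    have "(\<Prod>n\<in>{1..N}. xi n) \<noteq> 0" using xi_nz by simp
    moreover have "(\<Prod>n\<in>{1..N-1}. sov_eta q eta0 (k n) n) \<noteq> 0"
      by (subst prod_zero_iff) (auto intro!: eta_nz)
    ultimately show ?thesis by (simp add: sov_etaA_def)
  qed
  obtain lam where lam0: "lam \<noteq> 0" and lamN: "\<forall>b\<in>{1..M}. lam / x k b - x k b / lam \<noteq> 0"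
    using generic_lam[of "{1..M}" "\<lambda>b. x k b"] eta_nz M_le by force
  have Pi0: "Pi k lam \<noteq> 0" using lamN by (simp add: Pi_def)
  have S1: "(\<Sum>a'\<in>{1..M}. sov_coef N q eta0 k a' lam * aa (x k a') * pairing (Lb (kminus p k a')) (Rb k')) = 0"
  proof (rule sum.neutral, rule ballI)
    fix b assume b: "b \<in> {1..M}"
    then have bN: "b \<in> {1..N}" "b \<noteq> N" using M_le evs by auto
    then have "k' b = k b" using k'o by auto
    then show "sov_coef N q eta0 k b lam * aa (x k b) * pairing (Lb (kminus p k b)) (Rb k') = 0"
      using ortho[OF kminus_idx[OF k bN(1)] k'i kminus_ne[OF k bN(1)]] by simp
  qed
  have S2: "(\<Sum>a'\<in>{1..M}. sov_coef N q eta0 k' a' lam * abar (x k' a') * pairing (Lb k) (Rb (kplus p k' a'))) = 0"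
  proof (rule sum.neutral, rule ballI)
    fix b assume b: "b \<in> {1..M}"
    then have bN: "b \<in> {1..N}" "b \<noteq> N" using M_le evs by auto
    then have "k b = k' b" using k'o by auto
    then show "sov_coef N q eta0 k' b lam * abar (x k' b) * pairing (Lb k) (Rb (kplus p k' b)) = 0"
      using ortho[OF k kplus_idx[OF k'i bN(1)] kplus_ne[OF k'i bN(1), THEN not_sym]] by simp
  qed
  have L: "pairing (Lb k v* Aop lam) (Rb k') = sov_K N kappa * Pi k lam * (lam / sov_etaA N q eta0 xi k) * pairing (Lb k') (Rb k')"
    unfolding L_A[OF k lam0] pairing_add_left pairing_diff_left pairing_scale_left pairing_sum_left S1
      km ortho[OF kplus_idx[OF k NN] k'i ne1] evs(1)
    using bq[of k lam] by simp
  have R: "pairing (Lb k) (Aop lam *v Rb k') = sov_K N kappa * Pi k lam * (lam / sov_etaA N q eta0 xi k) * pairing (Lb k) (Rb k)"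
    unfolding R_A[OF k'i lam0] pairing_add_right pairing_diff_right pairing_scale_right pairing_sum_right S2
      kp ortho[OF k kminus_idx[OF k'i NN] ne2[THEN not_sym]] evs(1) eA
    using bq[of k' lam] Pi' by simp
  have "sov_K N kappa * Pi k lam * (lam / sov_etaA N q eta0 xi k) \<noteq> 0"
    using K_nz Pi0 lam0 eA0 by simp
  then show ?thesis using L R pairing_vm[of "Lb k" "Aop lam" "Rb k'"] by simp
qed

end



context sov begin

definition "Qf h = pairing (Lb h) (Rb h) * Vd M (\<lambda>b. x h b)"
definition "Prf h = (\<Prod>a\<in>{1..M}. \<Prod>j\<in>{1..h a}.
                  aa (sov_eta q eta0 j a) / abar (sov_eta q eta0 (j - 1) a))"

lemma Prf_step:
  assumes a: "a \<in> {1..M}" and ha: "1 \<le> h a"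
  shows "Prf h = Prf (h(a := h a - 1)) * (aa (sov_eta q eta0 (h a) a) / abar (sov_eta q eta0 (h a - 1) a))"
proof -
  define t where "t a j = aa (sov_eta q eta0 j a) / abar (sov_eta q eta0 (j - 1) a)" for a j
  define h' where "h' = h(a := h a - 1)"
  have fin: "finite {1..M}" by simp
  have P: "Prf g = (\<Prod>j\<in>{1..g a}. t a j) * (\<Prod>b\<in>{1..M}-{a}. \<Prod>j\<in>{1..g b}. t b j)" for g
    unfolding Prf_def t_def using prod.remove[OF fin a] by simp
  have rest: "(\<Prod>b\<in>{1..M}-{a}. \<Prod>j\<in>{1..h' b}. t b j) = (\<Prod>b\<in>{1..M}-{a}. \<Prod>j\<in>{1..h b}. t b j)"
    by (rule prod.cong) (auto simp: h'_def)
  obtain m where m: "h a = Suc m" using ha by (cases "h a") auto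
  have X: "(\<Prod>j\<in>{1..h a}. t a j) = (\<Prod>j\<in>{1..h' a}. t a j) * t a (h a)"
    by (simp add: h'_def m)
  have e2: "Prf h' = (\<Prod>j\<in>{1..h' a}. t a j) * (\<Prod>b\<in>{1..M}-{a}. \<Prod>j\<in>{1..h b}. t b j)"
    using P[of h'] rest by simp
  show ?thesis unfolding h'_def[symmetric] P[of h] e2 X
    by (simp add: t_def mult_ac)
qed

lemma main_induct:
  "\<forall>h. h \<in> sov_idx N p \<longrightarrow> (\<Sum>a\<in>{1..N}. h a) = n \<longrightarrow> Qf h = Qf (\<lambda>_. 0) * Prf h"
proof (induction n)
  case 0
  show ?case
  proof (intro allI impI)
    fix h assume h: "h \<in> sov_idx N p" and s: "(\<Sum>a\<in>{1..N}. h a) = 0"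
    have "\<forall>a\<in>{1..N}. h a = 0" using s by simp
    then have "h = (\<lambda>_. 0)" using idx_out[OF h] by (intro ext) (metis)
    moreover have "Prf (\<lambda>_. 0) = 1" by (simp add: Prf_def)
    ultimately show "Qf h = Qf (\<lambda>_. 0) * Prf h" by simp
  qed
next
  case (Suc n)
  show ?case
  proof (intro allI impI)
    fix h assume h: "h \<in> sov_idx N p" and s: "(\<Sum>a\<in>{1..N}. h a) = Suc n"
    obtain a where aN: "a \<in> {1..N}" and ha: "h a \<noteq> 0"
    proof (rule ccontr)
      assume "\<not> thesis"
      then have "\<forall>a\<in>{1..N}. h a = 0" using that by blast
      then show False using s by simp
    qed
    define h' where "h' = h(a := h a - 1)"
    have lt: "h a < p" using idx_lt[OF h aN] .
    have h'i: "h' \<in> sov_idx N p" unfolding h'_def by (rule upd_idx[OF h aN]) (use lt in auto)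
    have fin: "finite {1..N}" by simp
    have "(\<Sum>b\<in>{1..N}. h b) = h a + (\<Sum>b\<in>{1..N}-{a}. h b)" using sum.remove[OF fin aN] .
    moreover have "(\<Sum>b\<in>{1..N}. h' b) = h' a + (\<Sum>b\<in>{1..N}-{a}. h' b)" using sum.remove[OF fin aN] .
    moreover have "(\<Sum>b\<in>{1..N}-{a}. h' b) = (\<Sum>b\<in>{1..N}-{a}. h b)"
      by (rule sum.cong) (auto simp: h'_def)
    ultimately have "(\<Sum>b\<in>{1..N}. h' b) = n" using s ha by (simp add: h'_def)
    then have IH: "Qf h' = Qf (\<lambda>_. 0) * Prf h'" using Suc.IH h'i by blast
    show "Qf h = Qf (\<lambda>_. 0) * Prf h"
    proof (cases "a \<in> {1..M}")
      case True
      have "Qf h = Qf h' * (aa (sov_eta q eta0 (h a) a) / abar (sov_eta q eta0 (h a - 1) a))"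
        unfolding Qf_def h'_def using rec_a[OF h True] ha by simp
      moreover have "Prf h = Prf h' * (aa (sov_eta q eta0 (h a) a) / abar (sov_eta q eta0 (h a - 1) a))"
        unfolding h'_def using Prf_step[OF True] ha by simp
      ultimately show ?thesis using IH by simp
    next
      case False
      have evs: "even N" "M = N - 1" and aeq: "a = N" using eN_cases[of N] aN False by auto
      have p1: "pairing (Lb h) (Rb h) = pairing (Lb h') (Rb h')"
        unfolding h'_def using rec_N[OF h evs(1)] ha aeq by simp
      have v1: "Vd M (\<lambda>b. x h b) = Vd M (\<lambda>b. x h' b)"
        unfolding Vd_def using evs aeq by (intro prod.cong refl) (auto simp: h'_def)
      have r1: "Prf h = Prf h'"
        unfolding Prf_def using evs aeq by (intro prod.cong refl) (auto simp: h'_def)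
      show ?thesis using IH p1 v1 r1 by (simp add: Qf_def)
    qed
  qed
qed

lemma main_result:
  "(\<forall>k\<in>sov_idx N p. \<forall>h\<in>sov_idx N p. k \<noteq> h \<longrightarrow> pairing (Lb k) (Rb h) = 0)
    \<and> (\<exists>C. \<forall>h\<in>sov_idx N p.
         pairing (Lb h) (Rb h) =
           C * (\<Prod>a\<in>{1..brN N}. \<Prod>j\<in>{1..h a}.
                  aa (sov_eta q eta0 j a) / abar (sov_eta q eta0 (j - 1) a))
           / (\<Prod>a\<in>{1..brN N}. \<Prod>b\<in>{1..<a}.
                  sov_eta q eta0 (h a) a / sov_eta q eta0 (h b) b
                  - sov_eta q eta0 (h b) b / sov_eta q eta0 (h a) a))"
proof (intro conjI)
  show "\<forall>k\<in>sov_idx N p. \<forall>h\<in>sov_idx N p. k \<noteq> h \<longrightarrow> pairing (Lb k) (Rb h) = 0"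
    using ortho by blast
  show "\<exists>C. \<forall>h\<in>sov_idx N p.
         pairing (Lb h) (Rb h) =
           C * (\<Prod>a\<in>{1..brN N}. \<Prod>j\<in>{1..h a}.
                  aa (sov_eta q eta0 j a) / abar (sov_eta q eta0 (j - 1) a))
           / (\<Prod>a\<in>{1..brN N}. \<Prod>b\<in>{1..<a}.
                  sov_eta q eta0 (h a) a / sov_eta q eta0 (h b) b
                  - sov_eta q eta0 (h b) b / sov_eta q eta0 (h a) a)"
  proof (intro exI ballI)
    fix h assume h: "h \<in> sov_idx N p"
    have Q: "Qf h = Qf (\<lambda>_. 0) * Prf h" using main_induct h by blast
    have V0: "Vd M (\<lambda>b. x h b) \<noteq> 0" by (rule Vd_nz)
    have "pairing (Lb h) (Rb h) = Qf (\<lambda>_. 0) * Prf h / Vd M (\<lambda>b. x h b)"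
      using Q V0 unfolding Qf_def by (simp add: field_simps)
    then show "pairing (Lb h) (Rb h) = Qf (\<lambda>_. 0) * (\<Prod>a\<in>{1..brN N}. \<Prod>j\<in>{1..h a}.
                  aa (sov_eta q eta0 j a) / abar (sov_eta q eta0 (j - 1) a))
           / (\<Prod>a\<in>{1..brN N}. \<Prod>b\<in>{1..<a}.
                  sov_eta q eta0 (h a) a / sov_eta q eta0 (h b) b
                  - sov_eta q eta0 (h b) b / sov_eta q eta0 (h a) a)"
      by (simp add: Prf_def Vd_def ff_def)
  qed
qed

end


theorem mainTheorem1:
  fixes N p :: nat and q :: complex
    and eta0 kappa xi :: "nat \<Rightarrow> complex"
    and aa abar :: "complex \<Rightarrow> complex"
    and Aop Bop :: "complex \<Rightarrow> complex ^ 'n ^ 'n"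
    and Lb Rb :: "(nat \<Rightarrow> nat) \<Rightarrow> complex ^ 'n"
  assumes N_ge: "N \<ge> 1"
    and p_ge: "p \<ge> 3" and p_odd: "odd p"
    and q_p: "q ^ p = 1"
    and q2_prim: "\<forall>m. 0 < m \<and> m < p \<longrightarrow> (q ^ 2) ^ m \<noteq> 1"
    and kappa_nz: "\<forall>n\<in>{1..N}. kappa n \<noteq> 0"
    and xi_nz: "\<forall>n\<in>{1..N}. xi n \<noteq> 0"
    and eta0_nz: "\<forall>a\<in>{1..N}. eta0 a \<noteq> 0"
    and eta_dist: "\<forall>a\<in>{1..brN N}. \<forall>b\<in>{1..brN N}. a \<noteq> b \<longrightarrow>
        (\<forall>h h'. (sov_eta q eta0 h a)\<^sup>2 \<noteq> (sov_eta q eta0 h' b)\<^sup>2)"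
    and abar_nz: "\<forall>a\<in>{1..N}. \<forall>j. abar (sov_eta q eta0 j a) \<noteq> 0"
    and L_basis: "is_basis_family (sov_idx N p) Lb"
    and R_basis: "is_basis_family (sov_idx N p) Rb"
    and L_B: "\<And>k lam. k \<in> sov_idx N p \<Longrightarrow> lam \<noteq> 0 \<Longrightarrow>
        Lb k v* Bop lam = sov_b N q eta0 kappa k lam *s Lb k"
    and L_A: "\<And>k lam. k \<in> sov_idx N p \<Longrightarrow> lam \<noteq> 0 \<Longrightarrow>
        Lb k v* Aop lam =
          (of_nat (eN N) * sov_b N q eta0 kappa k lam / sov_eta q eta0 (k N) N) *s
            ((lam / sov_etaA N q eta0 xi k) *s Lb (kminus p k N)
             - (sov_etaA N q eta0 xi k / lam) *s Lb (kplus p k N))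
          + (\<Sum>a\<in>{1..brN N}.
               (sov_coef N q eta0 k a lam * aa (sov_eta q eta0 (k a) a)) *s Lb (kminus p k a))"
    and R_B: "\<And>k lam. k \<in> sov_idx N p \<Longrightarrow> lam \<noteq> 0 \<Longrightarrow>
        Bop lam *v Rb k = sov_b N q eta0 kappa k lam *s Rb k"
    and R_A: "\<And>k lam. k \<in> sov_idx N p \<Longrightarrow> lam \<noteq> 0 \<Longrightarrow>
        Aop lam *v Rb k =
          (of_nat (eN N) * sov_b N q eta0 kappa k lam / sov_eta q eta0 (k N) N) *s
            ((lam / sov_etaA N q eta0 xi k) *s Rb (kplus p k N)
             - (sov_etaA N q eta0 xi k / lam) *s Rb (kminus p k N))
          + (\<Sum>a\<in>{1..brN N}.
               (sov_coef N q eta0 k a lam * abar (sov_eta q eta0 (k a) a)) *s Rb (kplus p k a))"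
  shows "(\<forall>k\<in>sov_idx N p. \<forall>h\<in>sov_idx N p. k \<noteq> h \<longrightarrow> pairing (Lb k) (Rb h) = 0)
    \<and> (\<exists>C. \<forall>h\<in>sov_idx N p.
         pairing (Lb h) (Rb h) =
           C * (\<Prod>a\<in>{1..brN N}. \<Prod>j\<in>{1..h a}.
                  aa (sov_eta q eta0 j a) / abar (sov_eta q eta0 (j - 1) a))
           / (\<Prod>a\<in>{1..brN N}. \<Prod>b\<in>{1..<a}.
                  sov_eta q eta0 (h a) a / sov_eta q eta0 (h b) b
                  - sov_eta q eta0 (h b) b / sov_eta q eta0 (h a) a))"
proof -
  interpret sov N p q eta0 kappa xi aa abar Aop Bop Lb Rb
    by (unfold_locales) (fact assms)+
  show ?thesis by (rule main_result)
qed

end
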